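(* Let $G$ and $G'$ be simple directed graphs on $[n]$ with $E(G)\subseteq E(G')$ (i.e., $i\to j$ in $G$ implies $i\to j$ in $G'$), and let $W=W(G,\varepsilon,\delta)$ and $W'=W(G',\varepsilon,\delta)$ be CTLNs with the same legal parameters. Then $\lambda_{\max}(I-W)\ge\lambda_{\max}(I-W')$.
   Context: Legal parameters: $\delta>0$, $0<\varepsilon<\frac{\delta}{\delta+1}$. $W(G,\varepsilon,\delta)$ is the $n\times n$ matrix with $W_{ii}=0$, $W_{ij}=-1+\varepsilon$ if $j\to i$ in $G$, $W_{ij}=-1-\delta$ if $i\ne j$ and $j\not\to i$. $I-W$ has strictly positive entries, and $\lambda_{\max}$ denotes its Perron–Frobenius eigenvalue. *)

theory Defs
  imports "Jordan_Normal_Form.Spectral_Radius"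
begin

text \<open>Vertices of a graph on [n] are represented as 0,...,n-1. A directed graph is an
edge relation G :: nat => nat => bool, where G j i means the edge j -> i.\<close>

definition simple_digraph :: "nat \<Rightarrow> (nat \<Rightarrow> nat \<Rightarrow> bool) \<Rightarrow> bool" where
  "simple_digraph n G \<longleftrightarrow> (\<forall>i<n. \<not> G i i)"

definition legal_params :: "real \<Rightarrow> real \<Rightarrow> bool" where
  "legal_params \<epsilon> \<delta> \<longleftrightarrow> \<delta> > 0 \<and> 0 < \<epsilon> \<and> \<epsilon> < \<delta> / (\<delta> + 1)"

definition ctln_W :: "nat \<Rightarrow> (nat \<Rightarrow> nat \<Rightarrow> bool) \<Rightarrow> real \<Rightarrow> real \<Rightarrow> real mat" where
  "ctln_W n G \<epsilon> \<delta> = mat n n (\<lambda>(i, j).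
     if i = j then 0 else if G j i then -1 + \<epsilon> else -1 - \<delta>)"

text \<open>Perron-Frobenius eigenvalue of a (positive) real square matrix: its spectral radius.\<close>
definition lambda_max :: "real mat \<Rightarrow> real" where
  "lambda_max A = spectral_radius (map_mat complex_of_real A)"

end

theory Submission
  imports Defs
begin

lemma mv_sum: assumes "A \<in> carrier_mat n n" "v \<in> carrier_vec n" "i < n"
  shows "(A *\<^sub>v v) $ i = (\<Sum>j = 0..<n. A $$ (i,j) * v $ j)"
  using assms by (auto simp: index_mult_mat_vec scalar_prod_def intro!: sum.cong)

lemma pow_comm: assumes A: "A \<in> carrier_mat n n"
  shows "A * A ^\<^sub>m k = A ^\<^sub>m k * (A :: 'a :: semiring_1 mat)"
proof (induct k)
  case 0 then show ?case using A by simp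
next
  case (Suc k)
  have pk: "A ^\<^sub>m k \<in> carrier_mat n n" using A by simp
  have "A * A ^\<^sub>m Suc k = A * (A ^\<^sub>m k * A)" by simp
  also have "\<dots> = (A * A ^\<^sub>m k) * A" by (rule assoc_mult_mat[OF A pk A, symmetric])
  also have "\<dots> = A ^\<^sub>m Suc k * A" using Suc by simp
  finally show ?case .
qed

lemma spectrum_empty0: assumes M: "(M :: complex mat) \<in> carrier_mat 0 0" shows "spectrum M = {}"
proof -
  have z: "v = 0\<^sub>v 0" if "v \<in> carrier_vec 0" for v :: "complex vec"
    by (rule eq_vecI, insert that, auto)
  show ?thesis using M z unfolding spectrum_def eigenvalue_def eigenvector_def by auto
qed

lemma sr_mono:
  fixes A B :: "real mat"
  assumes A: "A \<in> carrier_mat n n" and B: "B \<in> carrier_mat n n"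
    and nn: "\<forall>i<n. \<forall>j<n. 0 \<le> B $$ (i,j) \<and> B $$ (i,j) \<le> A $$ (i,j)"
  shows "spectral_radius (map_mat of_real B) \<le> spectral_radius (map_mat of_real A)"
proof (cases "n = 0")
  case True
  then show ?thesis using A B by (simp add: spectral_radius_def spectrum_empty0)
next
  case False
  hence n: "n > 0" by simp
  define Ac where "Ac = (map_mat of_real A :: complex mat)"
  define Bc where "Bc = (map_mat of_real B :: complex mat)"
  have Ac: "Ac \<in> carrier_mat n n" and Bc: "Bc \<in> carrier_mat n n" using A B unfolding Ac_def Bc_def by auto
  have rA0: "spectral_radius Ac \<ge> 0" using spectral_radius_mem_max(1)[OF Ac n] by auto
  show ?thesis unfolding Ac_def[symmetric] Bc_def[symmetric]
  proof (rule ccontr)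
    assume "\<not> spectral_radius Bc \<le> spectral_radius Ac"
    hence lt: "spectral_radius Ac < spectral_radius Bc" by simp
    define r where "r = spectral_radius Bc"
    define s where "s = (spectral_radius Ac + r) / 2"
    define t where "t = r / s"
    have s0: "s > 0" and sA: "spectral_radius Ac < s" and sr: "s < r" using lt rA0 unfolding s_def r_def by auto
    have t1: "t > 1" unfolding t_def using s0 sr by simp
    from spectral_radius_mem_max(1)[OF Bc n] obtain lam where lam: "lam \<in> spectrum Bc" "norm lam = r"
      unfolding r_def by auto
    then obtain v where v: "eigenvector Bc v lam" unfolding spectrum_def eigenvalue_def by auto
    have vc: "v \<in> carrier_vec n" and v0: "v \<noteq> 0\<^sub>v n" and Bv: "Bc *\<^sub>v v = lam \<cdot>\<^sub>v v"
      using v Bc unfolding eigenvector_def by auto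
    define Mr where "Mr = (1/s) \<cdot>\<^sub>m A"
    define Mc where "Mc = (map_mat of_real Mr :: complex mat)"
    have Mr: "Mr \<in> carrier_mat n n" using A unfolding Mr_def by auto
    have Mc: "Mc \<in> carrier_mat n n" using Mr unfolding Mc_def by auto
    have "spectral_radius Mc < 1"
    proof -
      from spectral_radius_mem_max(1)[OF Mc n] obtain ev where ev: "ev \<in> spectrum Mc"
        "spectral_radius Mc = norm ev" by auto
      then obtain w where w: "eigenvector Mc w ev" unfolding spectrum_def eigenvalue_def by auto
      have wc: "w \<in> carrier_vec n" and w0: "w \<noteq> 0\<^sub>v n" and Mw: "Mc *\<^sub>v w = ev \<cdot>\<^sub>v w"
        using w Mc unfolding eigenvector_def by auto
      have "Ac *\<^sub>v w = (of_real s * ev) \<cdot>\<^sub>v w"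
      proof (rule eq_vecI)
        fix i assume i: "i < dim_vec ((of_real s * ev) \<cdot>\<^sub>v w)"
        hence i: "i < n" using wc by auto
        have "(Ac *\<^sub>v w) $ i = (\<Sum>j = 0..<n. Ac $$ (i,j) * w $ j)" by (rule mv_sum[OF Ac wc i])
        also have "\<dots> = of_real s * (\<Sum>j = 0..<n. Mc $$ (i,j) * w $ j)"
          unfolding sum_distrib_left
          by (rule sum.cong, insert i A s0, auto simp: Ac_def Mc_def Mr_def)
        also have "(\<Sum>j = 0..<n. Mc $$ (i,j) * w $ j) = (Mc *\<^sub>v w) $ i" by (rule mv_sum[OF Mc wc i, symmetric])
        also have "\<dots> = ev * w $ i" using Mw i wc by simp
        finally show "(Ac *\<^sub>v w) $ i = ((of_real s * ev) \<cdot>\<^sub>v w) $ i" using i wc by simp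
      qed (insert wc Ac, auto)
      hence "eigenvector Ac w (of_real s * ev)" using wc w0 Ac unfolding eigenvector_def by auto
      hence "norm (of_real s * ev) \<in> norm ` spectrum Ac" unfolding spectrum_def eigenvalue_def by auto
      from spectral_radius_mem_max(2)[OF Ac n this] have "s * norm ev \<le> spectral_radius Ac"
        using s0 by (simp add: norm_mult)
      hence "s * norm ev < s * 1" using sA by simp
      hence "norm ev < 1" using s0 by (simp only: mult_less_cancel_left_pos)
      thus ?thesis using ev by simp
    qed
    from spectral_radius_jnf_norm_bound_less_1_upper_triangular[OF Mc this]
    obtain c where c: "\<And>k. norm_bound (Mc ^\<^sub>m k) c" by auto
    have cb: "\<bar>(Mr ^\<^sub>m k) $$ (i,j)\<bar> \<le> c" if "i < n" "j < n" for k i j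
    proof -
      have "Mc ^\<^sub>m k = map_mat of_real (Mr ^\<^sub>m k)" unfolding Mc_def
        by (rule of_real_hom.mat_hom_pow[OF Mr, symmetric])
      with c[of k] that Mr show ?thesis unfolding norm_bound_def by auto
    qed
    define u where "u = vec n (\<lambda>j. cmod (v $ j))"
    have uc: "u \<in> carrier_vec n" unfolding u_def by auto
    have u0: "u $ j \<ge> 0" if "j < n" for j using that unfolding u_def by auto
    have key: "(Mr *\<^sub>v u) $ i \<ge> t * u $ i" if i: "i < n" for i
    proof -
      have "cmod ((Bc *\<^sub>v v) $ i) = cmod (\<Sum>j = 0..<n. Bc $$ (i,j) * v $ j)"
        by (simp add: mv_sum[OF Bc vc i])
      also have "\<dots> \<le> (\<Sum>j = 0..<n. cmod (Bc $$ (i,j) * v $ j))" by (rule norm_sum)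
      also have "\<dots> = (\<Sum>j = 0..<n. B $$ (i,j) * u $ j)"
        by (rule sum.cong, insert i nn B, auto simp: Bc_def u_def norm_mult)
      also have "\<dots> \<le> (\<Sum>j = 0..<n. A $$ (i,j) * u $ j)"
        by (rule sum_mono, insert i nn u0, auto intro: mult_right_mono)
      finally have ch: "cmod ((Bc *\<^sub>v v) $ i) \<le> (\<Sum>j = 0..<n. A $$ (i,j) * u $ j)" .
      have "t * u $ i = (1/s) * cmod ((Bc *\<^sub>v v) $ i)"
        using i vc lam(2) s0 Bv unfolding t_def u_def by (simp add: norm_mult)
      also have "\<dots> \<le> (1/s) * (\<Sum>j = 0..<n. A $$ (i,j) * u $ j)"
        using ch s0 by (intro mult_left_mono) auto
      also have "\<dots> = (Mr *\<^sub>v u) $ i"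
        unfolding mv_sum[OF Mr uc i] sum_distrib_left
        by (rule sum.cong, insert i A, auto simp: Mr_def)
      finally show ?thesis .
    qed
    have Mr0: "Mr $$ (i,j) \<ge> 0" if "i < n" "j < n" for i j
    proof -
      have "0 \<le> A $$ (i,j)" using nn that by (meson order.trans)
      thus ?thesis using that A s0 unfolding Mr_def by simp
    qed
    have grow: "\<forall>i<n. (Mr ^\<^sub>m k *\<^sub>v u) $ i \<ge> t ^ k * u $ i" for k
    proof (induct k)
      case 0 then show ?case using uc Mr by (auto simp: carrier_matD)
    next
      case (Suc k)
      show ?case
      proof (intro allI impI)
        fix i assume i: "i < n"
        have pk: "Mr ^\<^sub>m k \<in> carrier_mat n n" using Mr by simp
        have wc: "Mr ^\<^sub>m k *\<^sub>v u \<in> carrier_vec n" using pk uc by auto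
        have e1: "(Mr ^\<^sub>m Suc k *\<^sub>v u) $ i = (\<Sum>j = 0..<n. Mr $$ (i,j) * (Mr ^\<^sub>m k *\<^sub>v u) $ j)"
        proof -
          have "Mr ^\<^sub>m Suc k *\<^sub>v u = Mr *\<^sub>v (Mr ^\<^sub>m k *\<^sub>v u)"
            using pow_comm[OF Mr, of k] assoc_mult_mat_vec[OF Mr pk uc] by simp
          thus ?thesis using mv_sum[OF Mr wc i] by (simp only:)
        qed
        have "t ^ Suc k * u $ i = t ^ k * (t * u $ i)" by (simp add: mult_ac)
        also have "\<dots> \<le> t ^ k * (Mr *\<^sub>v u) $ i"
          using key[OF i] t1 by (auto intro: mult_left_mono)
        also have "\<dots> = (\<Sum>j = 0..<n. Mr $$ (i,j) * (t ^ k * u $ j))"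
          unfolding mv_sum[OF Mr uc i] sum_distrib_left by (rule sum.cong, auto)
        also have "\<dots> \<le> (\<Sum>j = 0..<n. Mr $$ (i,j) * (Mr ^\<^sub>m k *\<^sub>v u) $ j)"
          by (rule sum_mono, insert Suc i Mr0, auto intro: mult_left_mono)
        also have "\<dots> = (Mr ^\<^sub>m Suc k *\<^sub>v u) $ i" by (rule e1[symmetric])
        finally show "(Mr ^\<^sub>m Suc k *\<^sub>v u) $ i \<ge> t ^ Suc k * u $ i" .
      qed
    qed
    from v0 vc obtain i0 where i0: "i0 < n" "v $ i0 \<noteq> 0" by (auto simp: vec_eq_iff)
    hence ui0: "u $ i0 > 0" unfolding u_def by simp
    define S where "S = (\<Sum>j = 0..<n. u $ j)"
    have bnd: "(Mr ^\<^sub>m k *\<^sub>v u) $ i0 \<le> c * S" for k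
    proof -
      have pk: "Mr ^\<^sub>m k \<in> carrier_mat n n" using Mr by simp
      have "(Mr ^\<^sub>m k *\<^sub>v u) $ i0 = (\<Sum>j = 0..<n. (Mr ^\<^sub>m k) $$ (i0,j) * u $ j)"
        by (rule mv_sum[OF pk uc i0(1)])
      also have "\<dots> \<le> (\<Sum>j = 0..<n. c * u $ j)"
      proof (rule sum_mono)
        fix j assume "j \<in> {0..<n}"
        hence j: "j < n" by simp
        have "(Mr ^\<^sub>m k) $$ (i0,j) * u $ j \<le> \<bar>(Mr ^\<^sub>m k) $$ (i0,j)\<bar> * u $ j"
          using u0[OF j] by (auto intro: mult_right_mono)
        also have "\<dots> \<le> c * u $ j" using cb[OF i0(1) j] u0[OF j] by (auto intro: mult_right_mono)
        finally show "(Mr ^\<^sub>m k) $$ (i0,j) * u $ j \<le> c * u $ j" .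
      qed
      finally show ?thesis unfolding S_def sum_distrib_left .
    qed
    from real_arch_pow[OF t1, of "c * S / u $ i0"] obtain k where k: "c * S / u $ i0 < t ^ k" by auto
    hence "c * S < t ^ k * u $ i0" using ui0 by (simp add: divide_less_eq)
    moreover have "t ^ k * u $ i0 \<le> (Mr ^\<^sub>m k *\<^sub>v u) $ i0" using grow[of k] i0(1) by simp
    ultimately show False using bnd[of k] by linarith
  qed
qed

lemma entry_IW: assumes "i < n" "j < n"
  shows "(1\<^sub>m n - ctln_W n G \<epsilon> \<delta>) $$ (i,j) = (if i = j then 1 else if G j i then 1 - \<epsilon> else 1 + \<delta>)"
  using assms unfolding ctln_W_def by auto

theorem corollary2:
  fixes n :: nat and G G' :: "nat \<Rightarrow> nat \<Rightarrow> bool" and \<epsilon> \<delta> :: real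
  assumes "simple_digraph n G" and "simple_digraph n G'"
    and "\<forall>i<n. \<forall>j<n. G i j \<longrightarrow> G' i j"
    and "legal_params \<epsilon> \<delta>"
  shows "lambda_max (1\<^sub>m n - ctln_W n G \<epsilon> \<delta>) \<ge> lambda_max (1\<^sub>m n - ctln_W n G' \<epsilon> \<delta>)"
proof -
  have d: "\<delta> > 0" and e: "\<epsilon> > 0" and ed: "\<epsilon> < \<delta> / (\<delta> + 1)" using assms(4) unfolding legal_params_def by auto
  have "\<delta> / (\<delta> + 1) < 1" using d by simp
  hence e1: "\<epsilon> < 1" using ed by linarith
  show ?thesis unfolding lambda_max_def
  proof (rule sr_mono)
    show "1\<^sub>m n - ctln_W n G \<epsilon> \<delta> \<in> carrier_mat n n" unfolding ctln_W_def by auto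
    show "1\<^sub>m n - ctln_W n G' \<epsilon> \<delta> \<in> carrier_mat n n" unfolding ctln_W_def by auto
    show "\<forall>i<n. \<forall>j<n. 0 \<le> (1\<^sub>m n - ctln_W n G' \<epsilon> \<delta>) $$ (i,j) \<and>
       (1\<^sub>m n - ctln_W n G' \<epsilon> \<delta>) $$ (i,j) \<le> (1\<^sub>m n - ctln_W n G \<epsilon> \<delta>) $$ (i,j)"
      using assms(3) d e1 e by (auto simp: entry_IW)
  qed
qed

end
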